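(* Fix any strategy $\mathcal{G}$ for the partial feedback game, let $\pi\sim\mathcal{S}_{m,n}$ be uniform, and let $H_{t-1}$ be the (random) history up to time $t-1$. For any history $h_{t-1}$ up to time $t-1$ (occurring with positive probability) and any $i\in[n]$, \[\Pr[\pi_t = i \mid H_{t-1} = h_{t-1}]\le \frac{m_i(h_{t-1})}{mn-a_i(h_{t-1}) - Y(h_{t-1})}.\]
   Context: $\mathcal{S}_{m,n}$ is the set of words over $[n]$ in which each symbol appears exactly $m$ times (a deck of $mn$ cards), and $\pi\sim\mathcal{S}_{m,n}$ is uniform. In the partial feedback game the guesser makes guesses $g_1,\dots,g_{mn}\in[n]$ sequentially; after guess $g_t$ they learn only $y_t\in\{0,1\}$, where $y_t=1$ iff $\pi_t=g_t$. A strategy chooses $g_t$ as a function of $(g_1,\dots,g_{t-1},y_1,\dots,y_{t-1})$. A history up to time $s$ is $h_s=((g_1,\dots,g_s),(y_1,\dots,y_s))$; $H_s$ denotes the random history produced by the strategy on $\pi$. For a history $h_s$: $Y(h_s)=\sum_{r\le s} y_r$ is the number of correct guesses, $a_i(h_s)=|\{r\le s: g_r=i\}|$ is the number of times $i$ has been guessed, and $m_i(h_s)=m-|\{r\le s: g_r=i,\ y_r=1\}|$.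
   Formalization: The history $h_{t-1}$ also satisfies $a_i(h_{t-1}) + Y(h_{t-1}) < mn$, so the denominator $mn-a_i(h_{t-1}) - Y(h_{t-1})$ is positive. The statement above fails without it. *)

theory Defs
  imports "HOL-Probability.Probability"
begin

definition decks :: "nat \<Rightarrow> nat \<Rightarrow> nat list set" where
  "decks m n = {w. length w = m * n \<and> set w \<subseteq> {1..n} \<and> (\<forall>i\<in>{1..n}. count_list w i = m)}"

type_synonym history = "nat list \<times> bool list"
type_synonym strategy = "history \<Rightarrow> nat"

text \<open>History up to time s produced by strategy G on deck w (w ! r is the card at time r+1).\<close>
fun hist :: "strategy \<Rightarrow> nat list \<Rightarrow> nat \<Rightarrow> history" where
  "hist G w 0 = ([], [])"
| "hist G w (Suc s) =
     (let (gs, ys) = hist G w s; g = G (gs, ys) in (gs @ [g], ys @ [w ! s = g]))"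

definition Ycorrect :: "history \<Rightarrow> nat" where
  "Ycorrect h = length (filter id (snd h))"

definition aguessed :: "history \<Rightarrow> nat \<Rightarrow> nat" where
  "aguessed h i = count_list (fst h) i"

definition mleft :: "nat \<Rightarrow> history \<Rightarrow> nat \<Rightarrow> nat" where
  "mleft m h i = m - card {r. r < length (fst h) \<and> fst h ! r = i \<and> snd h ! r}"

definition deck_pmf :: "nat \<Rightarrow> nat \<Rightarrow> nat list pmf" where
  "deck_pmf m n = pmf_of_set (decks m n)"

end

theory Submission
  imports Defs
begin

lemma hist_len: "length (fst (hist G w k)) = k \<and> length (snd (hist G w k)) = k"
  by (induction k) (auto simp: Let_def split: prod.splits)

lemma hist_snd: "r < k \<Longrightarrow> snd (hist G w k) ! r = (w ! r = fst (hist G w k) ! r)"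
proof (induction k)
  case 0 then show ?case by simp
next
  case (Suc k)
  obtain gs ys where e: "hist G w k = (gs, ys)" by force
  have l: "length gs = k" "length ys = k" using hist_len[of G w k] e by auto
  show ?case
  proof (cases "r < k")
    case True
    then show ?thesis using Suc e l by (simp add: Let_def nth_append)
  next
    case False
    then have "r = k" using Suc by simp
    then show ?thesis using e l by (simp add: Let_def nth_append)
  qed
qed

lemma hist_eq:
  "(\<forall>r<k. (w ! r = fst (hist G w k) ! r) = (w' ! r = fst (hist G w k) ! r))
    \<Longrightarrow> hist G w' k = hist G w k"
proof (induction k)
  case 0 then show ?case by simp
next
  case (Suc k)
  obtain gs ys where e: "hist G w k = (gs, ys)" by force
  have l: "length gs = k" "length ys = k" using hist_len[of G w k] e by auto
  have "\<forall>r<k. (w ! r = fst (hist G w k) ! r) = (w' ! r = fst (hist G w k) ! r)"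
  proof (intro allI impI)
    fix r assume "r < k"
    then show "(w ! r = fst (hist G w k) ! r) = (w' ! r = fst (hist G w k) ! r)"
      using Suc.prems[rule_format, of r] e l by (simp add: Let_def nth_append)
  qed
  then have IH: "hist G w' k = (gs, ys)" using Suc.IH e by simp
  have "(w ! k = G (gs, ys)) = (w' ! k = G (gs, ys))"
    using Suc.prems[rule_format, of k] e l by (simp add: Let_def nth_append)
  then show ?case using IH e by (simp add: Let_def)
qed

lemma count_list_card: "count_list xs x = card {r. r < length xs \<and> xs ! r = x}"
proof -
  have "count_list xs x = length (filter ((=) x) xs)" by (rule count_list_eq_length_filter)
  also have "\<dots> = card {r. r < length xs \<and> x = xs ! r}" by (rule length_filter_conv_card)
  also have "{r. r < length xs \<and> x = xs ! r} = {r. r < length xs \<and> xs ! r = x}" by blast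
  finally show ?thesis .
qed

lemma card_filt: "finite X \<Longrightarrow> card {x\<in>X. P x} = (\<Sum>x\<in>X. if P x then 1 else 0)"
proof -
  assume X: "finite X"
  have "card {x\<in>X. P x} = (\<Sum>x\<in>{x\<in>X. P x}. 1)" by simp
  also have "\<dots> = (\<Sum>x\<in>X. if P x then 1 else 0)" by (rule sum.inter_filter[OF X])
  finally show ?thesis .
qed

lemma decks_finite: "finite (decks m n)"
proof -
  have "decks m n \<subseteq> {w. set w \<subseteq> {1..n} \<and> length w = m * n}"
    unfolding decks_def by auto
  moreover have "finite {w. set w \<subseteq> {1..n} \<and> length w = m * n}"
    by (rule finite_lists_length_eq) simp
  ultimately show ?thesis by (rule finite_subset)
qed

lemma decks_ne: "decks m n \<noteq> {}"
proof -
  define M where "M = (\<Sum>i\<in>{1..n}. replicate_mset m i)"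
  obtain xs where xs: "mset xs = M" using ex_mset by blast
  have c: "count M j = (if j \<in> {1..n} then m else 0)" for j
    unfolding M_def by (simp add: count_sum sum.delta)
  have "size M = m * n" unfolding M_def by (simp add: size_multiset_sum)
  then have "length xs = m * n" using xs by (metis size_mset)
  moreover have "set xs \<subseteq> {1..n}"
  proof
    fix x assume "x \<in> set xs"
    then have "count M x > 0" using xs by (metis count_mset_gt_0)
    then show "x \<in> {1..n}" using c[of x] by (auto split: if_splits)
  qed
  moreover have "\<forall>i\<in>{1..n}. count_list xs i = m"
    using c xs by (metis count_mset)
  ultimately have "xs \<in> decks m n" unfolding decks_def by blast
  then show ?thesis by blast
qed

theorem lemma3p1:
  fixes m n t i :: nat and G :: strategy and h :: history
  assumes G_range: "\<forall>hh. G hh \<in> {1..n}"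
    and t_range: "1 \<le> t" "t \<le> m * n"
    and i_range: "i \<in> {1..n}"
    and h_pos: "measure_pmf.prob (deck_pmf m n) {w. hist G w (t - 1) = h} > 0"
    and denom_pos: "aguessed h i + Ycorrect h < m * n"
  shows "measure_pmf.prob (deck_pmf m n) {w. hist G w (t - 1) = h \<and> w ! (t - 1) = i}
           / measure_pmf.prob (deck_pmf m n) {w. hist G w (t - 1) = h}
         \<le> real (mleft m h i) / (real (m * n) - real (aguessed h i) - real (Ycorrect h))"
proof -
  define s where "s = t - 1"
  define D where "D = decks m n"
  obtain gs ys where hgy: "h = (gs, ys)" by force
  define S where "S = {w\<in>D. hist G w s = h}"
  define A where "A = (\<lambda>r. {w\<in>S. w ! r = i})"
  define F where "F = {r. r < m * n \<and> \<not> (r < s \<and> (ys ! r \<or> gs ! r = i))}"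
  have Dfin: "finite D" and Dne: "D \<noteq> {}" unfolding D_def using decks_finite decks_ne by auto
  have Sfin: "finite S" using Dfin unfolding S_def by simp
  have sl: "s < m * n" using t_range unfolding s_def by simp
  have meas: "measure_pmf.prob (deck_pmf m n) X = card (D \<inter> X) / card D" for X
    unfolding deck_pmf_def D_def[symmetric] using measure_pmf_of_set[OF Dne Dfin] by simp
  have e1: "D \<inter> {w. hist G w (t - 1) = h} = S" unfolding S_def s_def by auto
  have e2: "D \<inter> {w. hist G w (t - 1) = h \<and> w ! (t - 1) = i} = A s"
    unfolding A_def S_def s_def by auto
  have Spos: "card S > 0" proof (rule ccontr)
    assume "\<not> card S > 0"
    then have "card S = 0" by simp
    then show False using h_pos unfolding meas e1 by simp
  qed
  then obtain w0 where w0: "w0 \<in> S" by (metis card.empty less_irrefl ex_in_conv)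
  have lens: "length gs = s" "length ys = s"
    using w0 hist_len[of G w0 s] unfolding S_def hgy by auto
  have Sprop: "w \<in> S \<Longrightarrow> w \<in> D \<and> length w = m * n \<and> (\<forall>r<s. ys ! r = (w ! r = gs ! r))
      \<and> count_list w i = m" for w
    using hist_snd[of _ s G w] i_range unfolding S_def hgy D_def decks_def by auto
  have Ale: "card (A s) \<le> card (A r)" if rF: "r \<in> F" for r
  proof -
    define f where "f = (\<lambda>w::nat list. w[s := w ! r, r := w ! s])"
    have rl: "r < m * n" using rF unfolding F_def by simp
    have inv: "f (f w) = w" if "length w = m * n" for w
      using that rl sl unfolding f_def
      by (cases "r = s") (auto intro!: nth_equalityI simp: nth_list_update)
    have "inj_on f (A s)"
      by (rule inj_onI) (metis inv Sprop A_def mem_Collect_eq)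
    moreover have "f ` A s \<subseteq> A r"
    proof
      fix v assume "v \<in> f ` A s"
      then obtain w where wA: "w \<in> A s" and v: "v = f w" by blast
      have wS: "w \<in> S" and wi: "w ! s = i" using wA unfolding A_def by auto
      note P = Sprop[OF wS]
      have ms: "mset v = mset w" unfolding v f_def using P rl sl by (simp add: mset_swap)
      have "length v = length w" "set v = set w" "\<And>x. count_list v x = count_list w x"
        using ms by (metis size_mset, metis set_mset_mset, metis count_mset)
      then have vD: "v \<in> D" using P unfolding D_def decks_def by simp
      have vr: "v ! r = i" unfolding v f_def using P rl sl wi by (simp add: nth_list_update)
      have "\<forall>r'<s. (w ! r' = fst (hist G w s) ! r') = (v ! r' = fst (hist G w s) ! r')"
      proof (intro allI impI)
        fix r' assume r': "r' < s"
        have fh: "fst (hist G w s) = gs" using wS unfolding S_def hgy by simp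
        show "(w ! r' = fst (hist G w s) ! r') = (v ! r' = fst (hist G w s) ! r')"
        proof (cases "r' = r")
          case True
          then have "\<not> ys ! r" "gs ! r \<noteq> i" using rF r' unfolding F_def by auto
          then show ?thesis using True P r' vr fh by auto
        next
          case False
          then have "v ! r' = w ! r'" unfolding v f_def using r' by (simp add: nth_list_update)
          then show ?thesis by simp
        qed
      qed
      then have "hist G v s = hist G w s" by (rule hist_eq)
      then have "hist G v s = h" using wS unfolding S_def by simp
      then show "v \<in> A r" using vD vr unfolding A_def S_def by simp
    qed
    moreover have "finite (A r)" using Sfin unfolding A_def by simp
    ultimately show ?thesis by (rule card_inj_on_le)
  qed
  define c where "c = card {r. r < s \<and> gs ! r = i \<and> ys ! r}"
  have ml: "mleft m h i = m - c" unfolding mleft_def c_def hgy using lens by simp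
  have rowb: "card {r\<in>F. w ! r = i} \<le> m - c" if wS: "w \<in> S" for w
  proof -
    note P = Sprop[OF wS]
    have d: "{r\<in>F. w ! r = i} \<inter> {r. r < s \<and> gs ! r = i \<and> ys ! r} = {}" unfolding F_def by auto
    have "{r\<in>F. w ! r = i} \<union> {r. r < s \<and> gs ! r = i \<and> ys ! r} \<subseteq> {r. r < length w \<and> w ! r = i}"
      using P sl unfolding F_def by auto
    then have "card ({r\<in>F. w ! r = i} \<union> {r. r < s \<and> gs ! r = i \<and> ys ! r}) \<le> card {r. r < length w \<and> w ! r = i}"
      by (intro card_mono) auto
    also have "\<dots> = m" using P count_list_card[of w i] by argo
    finally have "card {r\<in>F. w ! r = i} + c \<le> m" unfolding c_def
      using d by (subst (asm) card_Un_disjoint) (auto simp: F_def)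
    then show ?thesis by simp
  qed
  have Ffin: "finite F" unfolding F_def by simp
  have "card (A s) * card F = (\<Sum>r\<in>F. card (A s))" by simp
  also have "\<dots> \<le> (\<Sum>r\<in>F. card (A r))" using Ale by (rule sum_mono)
  also have "\<dots> = (\<Sum>r\<in>F. \<Sum>w\<in>S. if w ! r = i then 1 else 0)"
    unfolding A_def by (simp add: card_filt[OF Sfin])
  also have "\<dots> = (\<Sum>w\<in>S. \<Sum>r\<in>F. if w ! r = i then 1 else 0)" by (rule sum.swap)
  also have "\<dots> = (\<Sum>w\<in>S. card {r\<in>F. w ! r = i})" by (simp add: card_filt[OF Ffin])
  also have "\<dots> \<le> (\<Sum>w\<in>S. m - c)" using rowb by (rule sum_mono)
  finally have key: "card (A s) * card F \<le> card S * mleft m h i" using ml by (simp add: mult.commute)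
  have Y: "Ycorrect h = card {r. r < s \<and> ys ! r}"
    unfolding Ycorrect_def hgy using lens by (simp add: length_filter_conv_card)
  have a: "aguessed h i = card {r. r < s \<and> gs ! r = i}"
    unfolding aguessed_def hgy using lens
    by (simp add: count_list_card)
  have FD: "F = {..<m*n} - ({r. r < s \<and> ys ! r} \<union> {r. r < s \<and> gs ! r = i})"
    unfolding F_def by auto
  have "card F = m * n - card ({r. r < s \<and> ys ! r} \<union> {r. r < s \<and> gs ! r = i})"
    unfolding FD using sl by (subst card_Diff_subset) auto
  moreover have "card ({r. r < s \<and> ys ! r} \<union> {r. r < s \<and> gs ! r = i}) \<le> Ycorrect h + aguessed h i"
    unfolding Y a by (rule card_Un_le)
  ultimately have Fb: "m * n - aguessed h i - Ycorrect h \<le> card F" by linarith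
  have nk: "card (A s) * (m * n - aguessed h i - Ycorrect h) \<le> card S * mleft m h i"
    using key Fb by (meson le_trans mult_le_mono2)
  have k2: "real (card (A s)) * (real (m * n) - real (aguessed h i) - real (Ycorrect h))
      \<le> real (card S) * real (mleft m h i)"
  proof -
    have dd: "real (m * n - aguessed h i - Ycorrect h) = real (m * n) - real (aguessed h i) - real (Ycorrect h)"
      using denom_pos by linarith
    have "real (card (A s) * (m * n - aguessed h i - Ycorrect h)) \<le> real (card S * mleft m h i)" using nk by (rule of_nat_mono)
    then show ?thesis unfolding of_nat_mult dd .
  qed
  have dp: "real (m * n) - real (aguessed h i) - real (Ycorrect h) > 0" using denom_pos by linarith
  have "card (A s) / card S \<le> real (mleft m h i) / (real (m * n) - real (aguessed h i) - real (Ycorrect h))"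
  proof -
    have sp: "real (card S) > 0" using Spos by simp
    have "real (card (A s)) * (real (m * n) - real (aguessed h i) - real (Ycorrect h))
      \<le> real (mleft m h i) * real (card S)" using k2 by (simp only: mult.commute)
    then show ?thesis using dp sp by (simp add: divide_simps)
  qed
  moreover have Dp: "real (card D) > 0" using Dfin Dne by (simp add: card_gt_0_iff)
  moreover have "real (card (A s)) / real (card D) / (real (card S) / real (card D)) = card (A s) / card S"
    using Dp by simp
  ultimately show ?thesis unfolding meas e1 e2 by simp
qed

end
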